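(* Let $(x_1,y_1),\dots,(x_n,y_n)\in\mathbb{R}^d\times\mathbb{R}$ be data with empirical measure $\widehat\mu=\frac1n\sum_{i=1}^n\delta_{x_i}$. Let $\sigma(z)=\max(z,0)$ and consider $f_t(x)=\sum_{j=1}^m w_j(t)\sigma(x^Tu_j(t))$ trained on the empirical risk $\frac1{2n}\sum_{i=1}^n(y_i-f_t(x_i))^2$ by the gradient flow $$\frac{dw_j}{dt}=\frac1n\sum_{i=1}^n(y_i-f_t(x_i))\sigma(x_i^Tu_j),\qquad \frac{du_j}{dt}=\frac1n\sum_{i=1}^n(y_i-f_t(x_i))\,w_j\,\mathbb{1}_{x_i^Tu_j\ge0}\,x_i,$$ with initialization $u_j(0)=\Theta_j/\sqrt m$, $w_j(0)=\mathrm{sgn}(\rho_0(\Theta_j))\|\Theta_j\|/\sqrt m$, where $\rho_0$ is a signed measure of finite total variation and $\Theta_j$ are sampled independently from $\rho_0$. Suppose the dynamics reaches a stationarity, with network function $\widehat f_\infty$ and stationary signed measure $\widehat\rho_\infty=\frac1m\sum_j s_j\delta_{\sqrt m\,u_j(\infty)}$, $s_j=\mathrm{sgn}(\rho_0(\Theta_j))$. Let $\widehat{\mathcal{H}}_\infty$ be the (at most rank $n$) RKHS associated with $|\widehat\rho_\infty|$ and $\widehat\mu$ (defined in the context). Then $$\widehat f_\infty\in\arg\min_{g\in\widehat{\mathcal{H}}_\infty}\frac1n\sum_{i=1}^n(y_i-g(x_i))^2.$$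
   Context: For a signed measure $\rho=\rho_+-\rho_-$, $|\rho|=\rho_++\rho_-$; $\mathrm{sgn}(\rho_0(\Theta))$ is the sign of $d\rho_0/d|\rho_0|$ at $\Theta$ and sampling from $\rho_0$ means sampling from normalized $|\rho_0|$. With $\mu$ a probability measure on $\mathbb{R}^d$ and $\rho$ a finite, compactly supported signed measure, define $\mathcal{T}:L^2_\mu\to L^2_{|\rho|}$, $(\mathcal{T}f)(\Theta)=\int f(x)\|\Theta\|\sigma(x^T\Theta)\mu(dx)$, with adjoint $(\mathcal{T}^\star p)(x)=\int p(\Theta)\|\Theta\|\sigma(x^T\Theta)|\rho|(d\Theta)$; $\mathcal{T}^\star\mathcal{T}$ is the integral operator with kernel $H(x,\tilde x)=\int\|\Theta\|^2\sigma(x^T\Theta)\sigma(\tilde x^T\Theta)|\rho|(d\Theta)$. With eigendecomposition $\mathcal{T}^\star\mathcal{T}=\sum_i\lambda_ie_ie_i^*$, $\lambda_i>0$, the RKHS is $\{\sum_ih_ie_i:\sum_ih_i^2/\lambda_i<\infty\}$. $\widehat{\mathcal H}_\infty$ is this space with $\mu=\widehat\mu$, $\rho=\widehat\rho_\infty$. "Stationarity" means the weights reach a point at which the gradient-flow vector field vanishes. *)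

theory Defs
  imports "HOL-Analysis.Analysis"
begin

definition relu :: "real \<Rightarrow> real" where
  "relu z = max z 0"

definition net :: "nat \<Rightarrow> (nat \<Rightarrow> real) \<Rightarrow> (nat \<Rightarrow> 'a::real_inner) \<Rightarrow> 'a \<Rightarrow> real" where
  "net m w u x = (\<Sum>j<m. w j * relu (x \<bullet> u j))"

definition flow_w :: "nat \<Rightarrow> (nat \<Rightarrow> 'a::real_inner) \<Rightarrow> (nat \<Rightarrow> real) \<Rightarrow> nat
    \<Rightarrow> (nat \<Rightarrow> real) \<Rightarrow> (nat \<Rightarrow> 'a) \<Rightarrow> nat \<Rightarrow> real" where
  "flow_w n x y m w u j =
     (1 / real n) * (\<Sum>i<n. (y i - net m w u (x i)) * relu (x i \<bullet> u j))"

definition flow_u :: "nat \<Rightarrow> (nat \<Rightarrow> 'a::real_inner) \<Rightarrow> (nat \<Rightarrow> real) \<Rightarrow> nat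
    \<Rightarrow> (nat \<Rightarrow> real) \<Rightarrow> (nat \<Rightarrow> 'a) \<Rightarrow> nat \<Rightarrow> 'a" where
  "flow_u n x y m w u j =
     (1 / real n) *\<^sub>R (\<Sum>i<n. ((y i - net m w u (x i)) * w j
        * (if x i \<bullet> u j \<ge> 0 then 1 else 0)) *\<^sub>R x i)"

text \<open>Mass of the discrete signed measure rho = (1/m) sum_j s_j delta_{theta_j} at the atom th.\<close>
definition atom_mass :: "nat \<Rightarrow> (nat \<Rightarrow> real) \<Rightarrow> (nat \<Rightarrow> 'a) \<Rightarrow> 'a \<Rightarrow> real" where
  "atom_mass m s th \<theta> = (1 / real m) * (\<Sum>j\<in>{j. j < m \<and> th j = \<theta>}. s j)"

text \<open>Kernel H(x,x') = integral of |Theta|^2 sigma(x^T Theta) sigma(x'^T Theta) d|rho|(Theta),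
  with |rho| = sum over atoms of |mass| delta.\<close>
definition kernelH :: "nat \<Rightarrow> (nat \<Rightarrow> real) \<Rightarrow> (nat \<Rightarrow> 'a::real_inner) \<Rightarrow> 'a \<Rightarrow> 'a \<Rightarrow> real" where
  "kernelH m s th x x' =
     (\<Sum>\<theta>\<in>th ` {..<m}. \<bar>atom_mass m s th \<theta>\<bar> * (norm \<theta>)\<^sup>2 * relu (x \<bullet> \<theta>) * relu (x' \<bullet> \<theta>))"

text \<open>The integral operator T* T on L^2 of the empirical measure (1/n) sum_i delta_{x_i}.\<close>
definition TstarT :: "nat \<Rightarrow> (nat \<Rightarrow> 'a::real_inner) \<Rightarrow> nat \<Rightarrow> (nat \<Rightarrow> real) \<Rightarrow> (nat \<Rightarrow> 'a)
    \<Rightarrow> ('a \<Rightarrow> real) \<Rightarrow> 'a \<Rightarrow> real" where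
  "TstarT n x m s th g z = (1 / real n) * (\<Sum>i<n. kernelH m s th z (x i) * g (x i))"

text \<open>e is an eigenfunction (nonzero element of L^2_mu) of K with eigenvalue lam;
  equalities in L^2_mu are equalities at the data points.\<close>
definition is_eigenfun :: "nat \<Rightarrow> (nat \<Rightarrow> 'a) \<Rightarrow> (('a \<Rightarrow> real) \<Rightarrow> 'a \<Rightarrow> real)
    \<Rightarrow> ('a \<Rightarrow> real) \<Rightarrow> real \<Rightarrow> bool" where
  "is_eigenfun n x K e lam \<longleftrightarrow>
     (\<exists>i<n. e (x i) \<noteq> 0) \<and> (\<forall>i<n. K e (x i) = lam * e (x i))"

text \<open>RKHS = { sum h_i e_i } over eigenfunctions with positive eigenvalues
  (finite-dimensional here), as a subset of L^2_mu.\<close>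
definition rkhs :: "nat \<Rightarrow> (nat \<Rightarrow> 'a) \<Rightarrow> (('a \<Rightarrow> real) \<Rightarrow> 'a \<Rightarrow> real) \<Rightarrow> ('a \<Rightarrow> real) set" where
  "rkhs n x K = {g. \<exists>F c. finite F \<and> F \<subseteq> {e. \<exists>lam>0. is_eigenfun n x K e lam}
       \<and> (\<forall>i<n. g (x i) = (\<Sum>e\<in>F. c e * e (x i)))}"

definition emp_risk :: "nat \<Rightarrow> (nat \<Rightarrow> 'a) \<Rightarrow> (nat \<Rightarrow> real) \<Rightarrow> ('a \<Rightarrow> real) \<Rightarrow> real" where
  "emp_risk n x y g = (1 / real n) * (\<Sum>i<n. (y i - g (x i))\<^sup>2)"

end

theory Submission
  imports Defs "HOL-Library.Function_Algebras"
begin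


definition ipn :: "nat \<Rightarrow> (nat \<Rightarrow> real) \<Rightarrow> (nat \<Rightarrow> real) \<Rightarrow> real" where
  "ipn n v w = (\<Sum>i<n. v i * w i)"

definition mvn :: "nat \<Rightarrow> (nat \<Rightarrow> nat \<Rightarrow> real) \<Rightarrow> (nat \<Rightarrow> real) \<Rightarrow> nat \<Rightarrow> real" where
  "mvn n G v = (\<lambda>i. if i < n then (\<Sum>k<n. G i k * v k) else 0)"

definition suppn :: "nat \<Rightarrow> (nat \<Rightarrow> real) \<Rightarrow> bool" where
  "suppn n v \<longleftrightarrow> (\<forall>i\<ge>n. v i = 0)"

definition bf :: "nat \<Rightarrow> (nat \<Rightarrow> nat \<Rightarrow> real) \<Rightarrow> (nat \<Rightarrow> real) \<Rightarrow> (nat \<Rightarrow> real) \<Rightarrow> real" where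
  "bf n G v w = (\<Sum>i<n. \<Sum>k<n. v i * G i k * w k)"

definition symm :: "nat \<Rightarrow> (nat \<Rightarrow> nat \<Rightarrow> real) \<Rightarrow> bool" where
  "symm n G \<longleftrightarrow> (\<forall>i<n. \<forall>k<n. G i k = G k i)"

lemma ipn_comm: "ipn n v w = ipn n w v"
  unfolding ipn_def by (simp add: mult.commute)

lemma ipn_nonneg: "ipn n v v \<ge> 0"
  unfolding ipn_def by (intro sum_nonneg) auto

lemma ipn_zero_iff:
  assumes "suppn n v" "ipn n v v = 0" shows "v = (\<lambda>_. 0)"
proof
  fix i
  show "v i = 0"
  proof (cases "i < n")
    case True
    have "\<forall>i\<in>{..<n}. v i * v i = 0"
      using assms(2) unfolding ipn_def
      by (subst sum_nonneg_eq_0_iff[symmetric]) auto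
    then show ?thesis using True by auto
  next
    case False then show ?thesis using assms(1) unfolding suppn_def by auto
  qed
qed

lemma ipn_pos: "suppn n v \<Longrightarrow> v \<noteq> (\<lambda>_. 0) \<Longrightarrow> ipn n v v > 0"
  using ipn_zero_iff ipn_nonneg by (metis less_eq_real_def)

lemma ipn_mvn: "ipn n z (mvn n G v) = bf n G z v"
  unfolding ipn_def mvn_def bf_def by (simp add: sum_distrib_left mult.assoc)

lemma bf_sym: "symm n G \<Longrightarrow> bf n G v w = bf n G w v"
  unfolding bf_def symm_def
  by (subst sum.swap) (intro sum.cong refl, auto simp: mult.commute mult.left_commute)

lemma ipn_mvn_sym: "symm n G \<Longrightarrow> ipn n (mvn n G v) w = ipn n v (mvn n G w)"
  by (metis bf_sym ipn_comm ipn_mvn)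

lemma ipn_lin1: "ipn n (\<lambda>i. a * v i + b * w i) z = a * ipn n v z + b * ipn n w z"
  unfolding ipn_def by (simp add: algebra_simps sum.distrib sum_distrib_left)

lemma ipn_lin2: "ipn n z (\<lambda>i. a * v i + b * w i) = a * ipn n z v + b * ipn n z w"
  unfolding ipn_def by (simp add: algebra_simps sum.distrib sum_distrib_left)

lemma ipn_scale1: "ipn n (\<lambda>i. a * v i) z = a * ipn n v z"
  unfolding ipn_def by (simp add: algebra_simps sum_distrib_left)

lemma ipn_scale2: "ipn n z (\<lambda>i. a * v i) = a * ipn n z v"
  unfolding ipn_def by (simp add: algebra_simps sum_distrib_left)

lemma bf_expand: "bf n G (\<lambda>i. v i + t * z i) (\<lambda>i. v i + t * z i)
   = bf n G v v + t * bf n G v z + t * bf n G z v + t^2 * bf n G z z"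
  unfolding bf_def by (simp add: algebra_simps sum.distrib sum_distrib_left power2_eq_square)

lemma ipn_expand: "ipn n (\<lambda>i. v i + t * z i) (\<lambda>i. v i + t * z i)
   = ipn n v v + 2 * t * ipn n z v + t^2 * ipn n z z"
  unfolding ipn_def by (simp add: algebra_simps sum.distrib sum_distrib_left power2_eq_square)

lemma quad_zero:
  fixes a b :: real
  assumes "b \<ge> 0" "\<And>t. 2 * t * a \<le> t^2 * b" shows "a = 0"
proof (rule ccontr)
  assume "a \<noteq> 0"
  define t where "t = a / (b + 1)"
  have "2 * t * a \<le> t^2 * b" by (rule assms(2))
  hence "2 * t * a * (b+1)^2 \<le> t^2 * b * (b+1)^2"
    by (rule mult_right_mono) simp
  moreover have "2 * t * a * (b+1)^2 = 2 * a^2 * (b+1)"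
    using assms(1) by (simp add: t_def power2_eq_square field_simps)
  moreover have "t^2 * b * (b+1)^2 = a^2 * b"
  proof -
    have "(b+1)^2 \<noteq> 0" using assms(1) by simp
    then show ?thesis by (simp add: t_def power_divide)
  qed
  ultimately have "2 * a^2 * (b+1) \<le> a^2 * b" by simp
  moreover have "a^2 > 0" using \<open>a \<noteq> 0\<close> by simp
  ultimately show False using assms(1)
    by (smt (verit) mult_le_cancel_left_pos mult.commute)
qed

lemma cont_coord [continuous_intros]: "continuous_on S (\<lambda>v::nat\<Rightarrow>real. v i)"
  by (rule continuous_on_subset[OF continuous_on_product_coordinates]) auto

lemma compact_box: "compact (PiE UNIV (\<lambda>i::nat. if i < n then {-1..1::real} else {0}))"
proof -
  have "compactin (product_topology (\<lambda>i. euclidean) UNIV)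
          (PiE UNIV (\<lambda>i::nat. if i < n then {-1..1::real} else {0}))"
    by (subst compactin_PiE) auto
  then show ?thesis by (simp add: euclidean_product_topology)
qed

lemma bf_scale: "bf n G (\<lambda>i. c * z i) (\<lambda>i. c * z i) = c^2 * bf n G z z"
  unfolding bf_def by (simp add: sum_distrib_left algebra_simps power2_eq_square)

lemma eig_exists:
  assumes sym: "symm n G"
    and eigE: "\<forall>e\<in>E. \<exists>l. mvn n G e = (\<lambda>i. l * e i)"
    and v0: "suppn n v0" "\<forall>e\<in>E. ipn n v0 e = 0" "v0 \<noteq> (\<lambda>_. 0)"
  shows "\<exists>v. suppn n v \<and> (\<forall>e\<in>E. ipn n v e = 0) \<and> v \<noteq> (\<lambda>_. 0)
            \<and> (\<exists>l. mvn n G v = (\<lambda>i. l * v i))"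
proof -
  define W where "W = {v. suppn n v \<and> (\<forall>e\<in>E. ipn n v e = 0)}"
  have W_lin: "(\<lambda>i. a * v i + b * z i) \<in> W" if "v \<in> W" "z \<in> W" for a b v z
    using that unfolding W_def suppn_def by (auto simp: ipn_lin1)
  have W_scale: "(\<lambda>i. a * v i) \<in> W" if "v \<in> W" for a v
    using that unfolding W_def suppn_def by (auto simp: ipn_scale1)
  have W_mvn: "mvn n G v \<in> W" if "v \<in> W" for v
  proof -
    have "suppn n (mvn n G v)" unfolding suppn_def mvn_def by auto
    moreover have "ipn n (mvn n G v) e = 0" if "e \<in> E" for e
    proof -
      obtain l where l: "mvn n G e = (\<lambda>i. l * e i)" using eigE \<open>e \<in> E\<close> by blast
      have "ipn n (mvn n G v) e = ipn n v (mvn n G e)" by (rule ipn_mvn_sym[OF sym])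
      also have "\<dots> = l * ipn n v e" by (simp add: l ipn_scale2)
      also have "\<dots> = 0" using \<open>v \<in> W\<close> \<open>e \<in> E\<close> unfolding W_def by auto
      finally show ?thesis .
    qed
    ultimately show ?thesis unfolding W_def by auto
  qed
  have v0W: "v0 \<in> W" using v0 unfolding W_def by auto
  define Box where "Box = PiE UNIV (\<lambda>i::nat. if i < n then {-1..1::real} else {0})"
  define S where "S = W \<inter> {v. ipn n v v = 1}"
  have S_eq: "S = Box \<inter> ({v. ipn n v v = 1} \<inter> (\<Inter>e\<in>E. {v. ipn n v e = 0}))"
  proof (intro equalityI subsetI)
    fix v assume "v \<in> S"
    then have vW: "v \<in> W" and v1: "ipn n v v = 1" unfolding S_def by auto
    have "v i \<in> (if i < n then {-1..1} else {0})" for i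
    proof (cases "i < n")
      case True
      have "v i * v i \<le> ipn n v v" unfolding ipn_def
        by (rule member_le_sum[of i "{..<n}" "\<lambda>i. v i * v i"]) (use True in auto)
      then have "(v i)^2 \<le> 1^2" using v1 by (simp add: power2_eq_square)
      then have "\<bar>v i\<bar> \<le> 1" using abs_le_square_iff[of "v i" 1] by simp
      then show ?thesis using True by auto
    next
      case False then show ?thesis using vW unfolding W_def suppn_def by auto
    qed
    then have "v \<in> Box" unfolding Box_def by (auto simp: PiE_iff)
    then show "v \<in> Box \<inter> ({v. ipn n v v = 1} \<inter> (\<Inter>e\<in>E. {v. ipn n v e = 0}))"
      using vW v1 unfolding W_def by auto
  next
    fix v assume "v \<in> Box \<inter> ({v. ipn n v v = 1} \<inter> (\<Inter>e\<in>E. {v. ipn n v e = 0}))"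
    then show "v \<in> S" unfolding S_def W_def Box_def suppn_def
      by (auto simp: PiE_iff split: if_splits) (metis empty_iff insert_iff not_le)
  qed
  have "compact S"
    unfolding S_eq
  proof (rule compact_Int_closed)
    show "compact Box" unfolding Box_def by (rule compact_box)
    show "closed ({v. ipn n v v = 1} \<inter> (\<Inter>e\<in>E. {v. ipn n v e = 0}))"
      by (intro closed_Int closed_INT ballI closed_Collect_eq)
        (auto simp: ipn_def intro!: continuous_intros)
  qed
  have p0: "ipn n v0 v0 > 0" using ipn_pos v0 by blast
  define c where "c = 1 / sqrt (ipn n v0 v0)"
  have "ipn n (\<lambda>i. c * v0 i) (\<lambda>i. c * v0 i) = c^2 * ipn n v0 v0"
    by (simp add: ipn_scale1 ipn_scale2 power2_eq_square)
  also have "c^2 = 1 / ipn n v0 v0" using p0 by (simp add: c_def power_divide)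
  finally have "(\<lambda>i. c * v0 i) \<in> S"
    unfolding S_def using W_scale[OF v0W] p0 by simp
  then have "S \<noteq> {}" by blast
  have "continuous_on S (\<lambda>v. bf n G v v)"
    unfolding bf_def by (intro continuous_intros)
  then obtain vm where vmS: "vm \<in> S" and vmax: "\<forall>y\<in>S. bf n G y y \<le> bf n G vm vm"
    using continuous_attains_sup[OF \<open>compact S\<close> \<open>S \<noteq> {}\<close>] by blast
  define lam where "lam = bf n G vm vm"
  have vmW: "vm \<in> W" and vm1: "ipn n vm vm = 1" using vmS unfolding S_def by auto
  have claim1: "bf n G z z \<le> lam * ipn n z z" if "z \<in> W" for z
  proof (cases "z = (\<lambda>_. 0)")
    case True then show ?thesis by (simp add: bf_def ipn_def)
  next
    case False
    have zs: "suppn n z" using that unfolding W_def by auto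
    have p: "ipn n z z > 0" using ipn_pos[OF zs False] .
    define cz where "cz = 1 / sqrt (ipn n z z)"
    have "ipn n (\<lambda>i. cz * z i) (\<lambda>i. cz * z i) = cz^2 * ipn n z z"
      by (simp add: ipn_scale1 ipn_scale2 power2_eq_square)
    also have "cz^2 = 1 / ipn n z z" using p by (simp add: cz_def power_divide)
    finally have czS: "(\<lambda>i. cz * z i) \<in> S"
      unfolding S_def using W_scale[OF that] p by simp
    have "cz^2 * bf n G z z \<le> lam" using vmax czS unfolding lam_def bf_scale[symmetric] by blast
    moreover have "cz^2 = 1 / ipn n z z" using p by (simp add: cz_def power_divide)
    ultimately show ?thesis using p by (simp add: field_simps)
  qed
  have claim2: "bf n G z vm - lam * ipn n z vm = 0" if "z \<in> W" for z
  proof (rule quad_zero)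
    show "lam * ipn n z z - bf n G z z \<ge> 0" using claim1[OF that] by simp
    fix t :: real
    have "(\<lambda>i. 1 * vm i + t * z i) \<in> W" by (rule W_lin[OF vmW that])
    then have "bf n G (\<lambda>i. vm i + t * z i) (\<lambda>i. vm i + t * z i)
           \<le> lam * ipn n (\<lambda>i. vm i + t * z i) (\<lambda>i. vm i + t * z i)"
      using claim1 by simp
    then have "lam + t * bf n G vm z + t * bf n G z vm + t^2 * bf n G z z
           \<le> lam * (1 + 2 * t * ipn n z vm + t^2 * ipn n z z)"
      by (simp add: bf_expand ipn_expand vm1 lam_def)
    moreover have "bf n G vm z = bf n G z vm" by (rule bf_sym[OF sym])
    ultimately show "2 * t * (bf n G z vm - lam * ipn n z vm) \<le> t^2 * (lam * ipn n z z - bf n G z z)"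
      by (simp add: algebra_simps)
  qed
  define d where "d = (\<lambda>i. 1 * mvn n G vm i + (- lam) * vm i)"
  have dW: "d \<in> W" unfolding d_def by (rule W_lin[OF W_mvn[OF vmW] vmW])
  have gen: "ipn n z (\<lambda>i. 1 * mvn n G vm i + (- lam) * vm i) = bf n G z vm - lam * ipn n z vm" for z
    by (simp only: ipn_lin2 ipn_mvn)
  have "ipn n d d = bf n G d vm - lam * ipn n d vm"
    using gen[of d] by (simp only: d_def)
  also have "\<dots> = 0" by (rule claim2[OF dW])
  finally have "d = (\<lambda>_. 0)" using ipn_zero_iff dW unfolding W_def by blast
  then have "mvn n G vm = (\<lambda>i. lam * vm i)"
  proof -
    assume d0: "d = (\<lambda>_. 0)"
    show ?thesis
    proof
      fix i
      have "d i = 0" using d0 by simp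
      then show "mvn n G vm i = lam * vm i" by (simp add: d_def)
    qed
  qed
  moreover have "vm \<noteq> (\<lambda>_. 0)" using vm1 by (auto simp: ipn_def)
  ultimately show ?thesis using vmW unfolding W_def by blast
qed


lemma sum_fun_app: "(\<Sum>a\<in>A. f a) (x::nat) = (\<Sum>a\<in>A. (f a x :: real))"
  by (induction A rule: infinite_finite_induct) auto

lemma orth_card:
  assumes fin: "finite E" and nz: "\<forall>e\<in>E. suppn n e \<and> e \<noteq> (\<lambda>_. 0)"
    and orth: "\<forall>e\<in>E. \<forall>e'\<in>E. e \<noteq> e' \<longrightarrow> ipn n e e' = 0"
  shows "card E \<le> n"
proof -
  interpret V: vector_space "\<lambda>(c::real) (f::nat\<Rightarrow>real). (\<lambda>i. c * f i)"
    by unfold_locales (auto simp: algebra_simps fun_eq_iff)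
  define T where "T = (\<lambda>i. (\<lambda>k. if k = i then 1 else 0::real)) ` {..<n}"
  have finT: "finite T" and cardT: "card T \<le> n"
    unfolding T_def using card_image_le[of "{..<n}"] by auto
  have span: "E \<subseteq> V.span T"
  proof
    fix e assume "e \<in> E"
    then have se: "suppn n e" using nz by auto
    have eq: "e = (\<Sum>i<n. (\<lambda>k. e i * (if k = i then 1 else 0)))"
    proof
      fix k
      show "e k = (\<Sum>i<n. (\<lambda>k. e i * (if k = i then 1 else 0))) k"
        unfolding sum_fun_app using se unfolding suppn_def
        by (cases "k < n") (auto simp: if_distrib cong: if_cong)
    qed
    show "e \<in> V.span T"
      by (subst eq, intro V.span_sum V.span_scale V.span_base) (auto simp: T_def)
  qed
  have ind: "\<not> V.dependent E"
    unfolding V.dependent_finite[OF fin]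
  proof (clarify)
    fix c :: "(nat \<Rightarrow> real) \<Rightarrow> real" and e'
    assume e': "e' \<in> E" and cne: "c e' \<noteq> 0" and z: "(\<Sum>v\<in>E. (\<lambda>i. c v * v i)) = 0"
    have zk: "(\<Sum>v\<in>E. c v * v k) = 0" for k
      using fun_cong[OF z, of k] unfolding sum_fun_app by simp
    have "0 = (\<Sum>k<n. (\<Sum>v\<in>E. c v * v k) * e' k)" using zk by simp
    also have "\<dots> = (\<Sum>v\<in>E. c v * ipn n v e')"
      unfolding ipn_def by (simp add: sum_distrib_left sum_distrib_right mult.assoc) (rule sum.swap)
    also have "\<dots> = c e' * ipn n e' e' + (\<Sum>v\<in>E-{e'}. c v * ipn n v e')"
      using fin e' by (simp add: sum.remove)
    also have "(\<Sum>v\<in>E-{e'}. c v * ipn n v e') = 0"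
      using orth e' by (intro sum.neutral) auto
    finally have "c e' * ipn n e' e' = 0" by simp
    moreover have "ipn n e' e' > 0" using nz e' ipn_pos by blast
    ultimately show False using cne by simp
  qed
  have "card E \<le> card T" using V.independent_span_bound[OF finT ind span] by simp
  with cardT show ?thesis by simp
qed


lemma ipn_sub_sum:
  "ipn n (\<lambda>k. v k - (\<Sum>e\<in>E. c e * e k)) w = ipn n v w - (\<Sum>e\<in>E. c e * ipn n e w)"
  unfolding ipn_def
  by (simp add: algebra_simps sum_subtractf sum_distrib_left sum_distrib_right)
     (rule sum.swap)

lemma spectral:
  assumes sym: "symm n G"
  shows "\<exists>E. finite E \<and> (\<forall>e\<in>E. suppn n e \<and> e \<noteq> (\<lambda>_. 0) \<and> (\<exists>l. mvn n G e = (\<lambda>i. l * e i)))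
     \<and> (\<forall>e\<in>E. \<forall>e'\<in>E. e \<noteq> e' \<longrightarrow> ipn n e e' = 0)
     \<and> (\<forall>v. suppn n v \<longrightarrow> (\<forall>k. v k = (\<Sum>e\<in>E. ipn n v e / ipn n e e * e k)))"
proof -
  define P where "P E \<longleftrightarrow> finite E \<and> (\<forall>e\<in>E. suppn n e \<and> e \<noteq> (\<lambda>_. 0) \<and> (\<exists>l. mvn n G e = (\<lambda>i. l * e i)))
     \<and> (\<forall>e\<in>E. \<forall>e'\<in>E. e \<noteq> e' \<longrightarrow> ipn n e e' = 0)" for E
  have "P {}" unfolding P_def by auto
  moreover have "\<forall>E. P E \<longrightarrow> card E < Suc n"
  proof (intro allI impI)
    fix E assume "P E"
    then have "card E \<le> n" unfolding P_def by (intro orth_card) auto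
    then show "card E < Suc n" by simp
  qed
  ultimately obtain E where PE: "P E" and maxE: "\<forall>E'. P E' \<longrightarrow> card E' \<le> card E"
    using Lattices_Big.ex_has_greatest_nat[of P "{}" card "Suc n"] by blast
  have fin: "finite E" and eig: "\<forall>e\<in>E. suppn n e \<and> e \<noteq> (\<lambda>_. 0) \<and> (\<exists>l. mvn n G e = (\<lambda>i. l * e i))"
    and orth: "\<forall>e\<in>E. \<forall>e'\<in>E. e \<noteq> e' \<longrightarrow> ipn n e e' = 0"
    using PE unfolding P_def by auto
  have dec: "v k = (\<Sum>e\<in>E. ipn n v e / ipn n e e * e k)" if sv: "suppn n v" for v k
  proof -
    define v' where "v' = (\<lambda>k. v k - (\<Sum>e\<in>E. ipn n v e / ipn n e e * e k))"
    have sv': "suppn n v'" 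
      unfolding suppn_def
    proof (intro allI impI)
      fix i assume "n \<le> i"
      then have "v i = 0" "\<forall>e\<in>E. e i = 0" using sv eig unfolding suppn_def by auto
      then show "v' i = 0" unfolding v'_def by (simp add: sum.neutral)
    qed
    have orth': "\<forall>e0\<in>E. ipn n v' e0 = 0"
    proof
      fix e0 assume e0: "e0 \<in> E"
      have "ipn n v' e0 = ipn n v e0 - (\<Sum>e\<in>E. ipn n v e / ipn n e e * ipn n e e0)"
        unfolding v'_def by (rule ipn_sub_sum)
      also have "(\<Sum>e\<in>E. ipn n v e / ipn n e e * ipn n e e0)
          = ipn n v e0 / ipn n e0 e0 * ipn n e0 e0 + (\<Sum>e\<in>E-{e0}. ipn n v e / ipn n e e * ipn n e e0)"
        by (rule sum.remove[OF fin e0])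
      also have "(\<Sum>e\<in>E-{e0}. ipn n v e / ipn n e e * ipn n e e0) = 0"
        using orth e0 by (intro sum.neutral) auto
      also have "ipn n v e0 / ipn n e0 e0 * ipn n e0 e0 = ipn n v e0"
        using eig e0 ipn_pos[of n e0] by simp
      finally show "ipn n v' e0 = 0" by simp
    qed
    have "v' = (\<lambda>_. 0)"
    proof (rule ccontr)
      assume "v' \<noteq> (\<lambda>_. 0)"
      have "\<forall>e\<in>E. \<exists>l. mvn n G e = (\<lambda>i. l * e i)" using eig by blast
      from eig_exists[OF sym this sv' orth' \<open>v' \<noteq> (\<lambda>_. 0)\<close>]
      obtain v'' where v'': "suppn n v''" "\<forall>e\<in>E. ipn n v'' e = 0" "v'' \<noteq> (\<lambda>_. 0)"
        "\<exists>l. mvn n G v'' = (\<lambda>i. l * v'' i)" by blast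
      have "ipn n v'' v'' > 0" using ipn_pos v'' by blast
      then have notin: "v'' \<notin> E" using v''(2) by auto
      have a: "finite (insert v'' E)" using fin by simp
      have b: "\<forall>e\<in>insert v'' E. suppn n e \<and> e \<noteq> (\<lambda>_. 0) \<and> (\<exists>l. mvn n G e = (\<lambda>i. l * e i))"
        using eig v'' by blast
      have c: "\<forall>e\<in>insert v'' E. \<forall>e'\<in>insert v'' E. e \<noteq> e' \<longrightarrow> ipn n e e' = 0"
        using orth v''(2) ipn_comm[of n] by auto
      have "P (insert v'' E)" unfolding P_def using a b c by (intro conjI)
      then have "card (insert v'' E) \<le> card E" using maxE by blast
      then show False using notin fin by simp
    qed
    then have "v' k = 0" by simp
    then show ?thesis unfolding v'_def by simp
  qed
  have decA: "\<forall>v. suppn n v \<longrightarrow> (\<forall>k. v k = (\<Sum>e\<in>E. ipn n v e / ipn n e e * e k))"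
    by (intro allI impI) (rule dec)
  show ?thesis by (rule exI[of _ E], intro conjI fin eig orth decA)
qed



lemma relu_alt: "relu z = (if z \<ge> 0 then z else 0)"
  unfolding relu_def by auto

lemma relu_nonneg: "relu z \<ge> 0" unfolding relu_def by auto

lemma relu_le_abs: "relu z \<le> \<bar>z\<bar>" unfolding relu_def by auto

lemma relu_scale: "c \<ge> 0 \<Longrightarrow> relu (c * z) = c * relu z"
  unfolding relu_def by (auto simp: max_def mult_le_0_iff zero_le_mult_iff)

lemma flow_identity:
  "u j \<bullet> flow_u n x y m w u j = w j * flow_w n x y m w u j"
  unfolding flow_u_def flow_w_def
  by (simp add: inner_sum_right sum_distrib_left relu_alt inner_commute algebra_simps
      cong: if_cong) (intro sum.cong refl, auto)

lemma inner_self_deriv: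
  assumes "(f has_vector_derivative f') (at t within S)"
  shows "((\<lambda>t. f t \<bullet> f t) has_real_derivative 2 * (f t \<bullet> f')) (at t within S)"
proof -
  have d: "(f has_derivative (\<lambda>h. h *\<^sub>R f')) (at t within S)"
    using assms by (simp add: has_vector_derivative_def)
  have "((\<lambda>t. f t \<bullet> f t) has_derivative (\<lambda>h. f t \<bullet> (h *\<^sub>R f') + (h *\<^sub>R f') \<bullet> f t)) (at t within S)"
    by (rule has_derivative_inner[OF d d])
  moreover have "(\<lambda>h. f t \<bullet> (h *\<^sub>R f') + (h *\<^sub>R f') \<bullet> f t) = (*) (2 * (f t \<bullet> f'))"
    by (auto simp: inner_commute algebra_simps)
  ultimately show ?thesis by (simp add: has_field_derivative_def)
qed

lemma gronwall2:
  fixes P P' :: "real \<Rightarrow> real" and T K :: real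
  assumes "T \<ge> 0" "K \<ge> 0"
    and cont: "continuous_on {0..T} P"
    and deriv: "\<And>\<tau>. 0 < \<tau> \<Longrightarrow> \<tau> < T \<Longrightarrow> (P has_real_derivative P' \<tau>) (at \<tau>)"
    and bound: "\<And>\<tau>. 0 < \<tau> \<Longrightarrow> \<tau> < T \<Longrightarrow> \<bar>P' \<tau>\<bar> \<le> K * P \<tau>"
  shows "P 0 \<le> P T * exp (K * T)" and "P T \<le> P 0 * exp (K * T)"
proof -
  have "(\<lambda>\<tau>. P \<tau> * exp (K * \<tau>)) 0 \<le> (\<lambda>\<tau>. P \<tau> * exp (K * \<tau>)) T"
  proof (rule DERIV_nonneg_imp_increasing_open[OF \<open>T \<ge> 0\<close>])
    fix \<tau> assume t: "0 < \<tau>" "\<tau> < T"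
    have "((\<lambda>\<tau>. P \<tau> * exp (K * \<tau>)) has_real_derivative
            P' \<tau> * exp (K * \<tau>) + P \<tau> * (exp (K * \<tau>) * K)) (at \<tau>)"
      using deriv[OF t] by (auto intro!: derivative_eq_intros)
    moreover have "P' \<tau> * exp (K * \<tau>) + P \<tau> * (exp (K * \<tau>) * K) \<ge> 0"
    proof -
      have "P' \<tau> + K * P \<tau> \<ge> 0" using bound[OF t] by linarith
      then have "exp (K * \<tau>) * (P' \<tau> + K * P \<tau>) \<ge> 0" by simp
      then show ?thesis by (simp add: algebra_simps)
    qed
    ultimately show "\<exists>y. ((\<lambda>\<tau>. P \<tau> * exp (K * \<tau>)) has_real_derivative y) (at \<tau>) \<and> 0 \<le> y"
      by blast
  next
    show "continuous_on {0..T} (\<lambda>\<tau>. P \<tau> * exp (K * \<tau>))"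
      by (intro continuous_intros cont)
  qed
  then show "P 0 \<le> P T * exp (K * T)" by simp
  have "(\<lambda>\<tau>. - (P \<tau> * exp (- K * \<tau>))) 0 \<le> (\<lambda>\<tau>. - (P \<tau> * exp (- K * \<tau>))) T"
  proof (rule DERIV_nonneg_imp_increasing_open[OF \<open>T \<ge> 0\<close>])
    fix \<tau> assume t: "0 < \<tau>" "\<tau> < T"
    have "((\<lambda>\<tau>. - (P \<tau> * exp (- K * \<tau>))) has_real_derivative
            - (P' \<tau> * exp (- K * \<tau>) + P \<tau> * (exp (- K * \<tau>) * (- K)))) (at \<tau>)"
      using deriv[OF t] by (auto intro!: derivative_eq_intros)
    moreover have "- (P' \<tau> * exp (- K * \<tau>) + P \<tau> * (exp (- K * \<tau>) * (- K))) \<ge> 0"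
    proof -
      have "K * P \<tau> - P' \<tau> \<ge> 0" using bound[OF t] by linarith
      then have "exp (- K * \<tau>) * (K * P \<tau> - P' \<tau>) \<ge> 0" by simp
      then show ?thesis by (simp add: algebra_simps)
    qed
    ultimately show "\<exists>y. ((\<lambda>\<tau>. - (P \<tau> * exp (- K * \<tau>))) has_real_derivative y) (at \<tau>) \<and> 0 \<le> y"
      by blast
  next
    show "continuous_on {0..T} (\<lambda>\<tau>. - (P \<tau> * exp (- K * \<tau>)))"
      by (intro continuous_intros cont)
  qed
  then have "P T * exp (- K * T) \<le> P 0" by simp
  then have "P T * exp (- K * T) * exp (K * T) \<le> P 0 * exp (K * T)"
    by (rule mult_right_mono) simp
  then show "P T \<le> P 0 * exp (K * T)" by (simp add: mult.assoc exp_add[symmetric])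
qed


lemma neuron_sign:
  fixes x :: "nat \<Rightarrow> 'a::real_inner" and w :: "real \<Rightarrow> nat \<Rightarrow> real" and u :: "real \<Rightarrow> nat \<Rightarrow> 'a"
  assumes n1: "n \<ge> 1" and jm: "j < m"
    and sj: "s = 1 \<or> s = -1"
    and init_u: "u 0 j = (1 / sqrt (real m)) *\<^sub>R \<Theta>"
    and init_w: "w 0 j = s * norm \<Theta> / sqrt (real m)"
    and flow_w: "\<forall>j<m. \<forall>t\<ge>0. ((\<lambda>t. w t j) has_real_derivative
                   flow_w n x y m (w t) (u t) j) (at t within {0..})"
    and flow_u: "\<forall>j<m. \<forall>t\<ge>0. ((\<lambda>t. u t j) has_vector_derivative
                   flow_u n x y m (w t) (u t) j) (at t within {0..})"
    and lim_w: "((\<lambda>t. w t j) \<longlongrightarrow> wi) at_top"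
    and lim_u: "((\<lambda>t. u t j) \<longlongrightarrow> ui) at_top"
  shows "wi = s * norm ui"
proof -
  define fw where "fw t = flow_w n x y m (w t) (u t) j" for t
  define fu where "fu t = flow_u n x y m (w t) (u t) j" for t
  have dw: "((\<lambda>t. w t k) has_real_derivative flow_w n x y m (w t) (u t) k) (at t within {0..})"
    if "k < m" "t \<ge> 0" for k t using flow_w that by blast
  have du: "((\<lambda>t. u t k) has_vector_derivative flow_u n x y m (w t) (u t) k) (at t within {0..})"
    if "k < m" "t \<ge> 0" for k t using flow_u that by blast
  have cw: "continuous_on {0..} (\<lambda>t. w t k)" if "k < m" for k
    by (rule DERIV_continuous_on[OF dw[OF that]]) auto
  have cu: "continuous_on {0..} (\<lambda>t. u t k)" if "k < m" for k
    unfolding continuous_on_eq_continuous_within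
    using has_vector_derivative_continuous[OF du[OF that]] by auto
  define r where "r t i = y i - net m (w t) (u t) (x i)" for t i
  have cr: "continuous_on {0..} (\<lambda>t. r t i)" for i
    unfolding r_def net_def relu_def
    by (intro continuous_intros cw cu) auto
  define g where "g t = (1 / real n) * (\<Sum>i<n. \<bar>r t i\<bar> * norm (x i))" for t
  have cg: "continuous_on {0..} g"
    unfolding g_def by (intro continuous_intros cr)
  define Q where "Q t = w t j * w t j - u t j \<bullet> u t j" for t
  have dQ: "(Q has_real_derivative 0) (at t within {0..})" if "t \<in> {0..}" for t
  proof -
    have "(Q has_real_derivative (fw t * w t j + fw t * w t j - 2 * (u t j \<bullet> fu t))) (at t within {0..})"
      unfolding Q_def fw_def fu_def
      by (intro DERIV_diff DERIV_mult inner_self_deriv dw du jm) (use that in auto)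
    moreover have "u t j \<bullet> fu t = w t j * fw t" unfolding fu_def fw_def by (rule flow_identity)
    ultimately show ?thesis by (simp add: algebra_simps)
  qed
  obtain cQ where cQ: "\<forall>t\<in>{0..}. Q t = cQ"
    using has_field_derivative_zero_constant[OF convex_real_interval(1) dQ] by blast
  have sq: "s * s = 1" using sj by auto
  have sqm: "sqrt (real m) * sqrt (real m) = real m" by simp
  have "Q 0 = 0"
    unfolding Q_def init_u init_w
    by (simp add: power2_norm_eq_inner[symmetric] power2_eq_square field_simps sq)
  then have wsq: "w t j * w t j = u t j \<bullet> u t j" if "t \<ge> 0" for t
    using cQ that unfolding Q_def by force
  have nu: "norm (u t j) = \<bar>w t j\<bar>" if "t \<ge> 0" for t
    using wsq[OF that] by (metis norm_eq_sqrt_inner real_sqrt_abs2)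
  have fwb: "\<bar>fw t\<bar> \<le> g t * \<bar>w t j\<bar>" if "t \<ge> 0" for t
  proof -
    have "\<bar>\<Sum>i<n. r t i * relu (x i \<bullet> u t j)\<bar> \<le> (\<Sum>i<n. \<bar>r t i * relu (x i \<bullet> u t j)\<bar>)"
      by (rule sum_abs)
    also have "\<dots> \<le> (\<Sum>i<n. \<bar>r t i\<bar> * norm (x i) * norm (u t j))"
    proof (rule sum_mono)
      fix i
      have "relu (x i \<bullet> u t j) \<le> norm (x i) * norm (u t j)"
        using relu_le_abs[of "x i \<bullet> u t j"] Cauchy_Schwarz_ineq2[of "x i" "u t j"] by linarith
      then show "\<bar>r t i * relu (x i \<bullet> u t j)\<bar> \<le> \<bar>r t i\<bar> * norm (x i) * norm (u t j)"
        using relu_nonneg[of "x i \<bullet> u t j"]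
        by (simp add: abs_mult mult.assoc mult_left_mono)
    qed
    also have "\<dots> = (\<Sum>i<n. \<bar>r t i\<bar> * norm (x i)) * \<bar>w t j\<bar>"
      by (simp add: sum_distrib_right nu[OF that])
    finally have "\<bar>\<Sum>i<n. r t i * relu (x i \<bullet> u t j)\<bar> \<le> (\<Sum>i<n. \<bar>r t i\<bar> * norm (x i)) * \<bar>w t j\<bar>" .
    then show ?thesis
      unfolding fw_def flow_w_def g_def r_def[symmetric] using n1
      by (simp add: abs_mult divide_simps mult.assoc)
  qed
  define P where "P t = w t j * w t j" for t
  define P' where "P' t = fw t * w t j + fw t * w t j" for t
  have dP: "(P has_real_derivative P' t) (at t)" if "t > 0" for t
  proof -
    have "(P has_real_derivative P' t) (at t within {0..})"
      unfolding P_def P'_def fw_def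
      by (intro DERIV_mult dw jm) (use that in auto)
    moreover have "at t within {0..} = at t"
      by (rule at_within_interior) (use that in auto)
    ultimately show ?thesis by simp
  qed
  have Pb: "\<bar>P' t\<bar> \<le> 2 * g t * P t" if "t \<ge> 0" for t
  proof -
    have "\<bar>P' t\<bar> = 2 * \<bar>fw t\<bar> * \<bar>w t j\<bar>" unfolding P'_def by (simp add: abs_mult)
    also have "\<dots> \<le> 2 * (g t * \<bar>w t j\<bar>) * \<bar>w t j\<bar>"
      using fwb[OF that] by (simp add: mult_right_mono)
    also have "\<dots> = 2 * g t * P t" unfolding P_def by (simp add: abs_mult_self_eq algebra_simps)
    finally show ?thesis .
  qed
  have gron: "\<exists>K. P 0 \<le> P T * exp (K * T) \<and> P T \<le> P 0 * exp (K * T)" if T0: "T \<ge> 0" for T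
  proof -
    have "continuous_on {0..T} g" by (rule continuous_on_subset[OF cg]) auto
    then obtain tm where tm: "tm \<in> {0..T}" "\<forall>\<tau>\<in>{0..T}. g \<tau> \<le> g tm"
      using continuous_attains_sup[of "{0..T}" g] T0 by auto
    define K where "K = 2 * \<bar>g tm\<bar>"
    have "K \<ge> 0" unfolding K_def by simp
    have cP: "continuous_on {0..T} P"
      unfolding P_def by (intro continuous_intros continuous_on_subset[OF cw[OF jm]]) auto
    have bnd: "\<bar>P' \<tau>\<bar> \<le> K * P \<tau>" if "0 < \<tau>" "\<tau> < T" for \<tau>
    proof -
      have "g \<tau> \<le> g tm" using tm(2) that by simp
      then have "g \<tau> \<le> \<bar>g tm\<bar>" by linarith
      moreover have "P \<tau> \<ge> 0" unfolding P_def by simp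
      ultimately have "2 * g \<tau> * P \<tau> \<le> K * P \<tau>" unfolding K_def
        by (intro mult_right_mono) auto
      then show ?thesis using Pb[of \<tau>] that by simp
    qed
    have "P 0 \<le> P T * exp (K * T)" "P T \<le> P 0 * exp (K * T)"
      using gronwall2[OF T0 \<open>K \<ge> 0\<close> cP dP bnd] by auto
    then show ?thesis by blast
  qed
  have sgn_nonneg: "s * w T j \<ge> 0" if T0: "T \<ge> 0" for T
  proof (cases "\<Theta> = 0")
    case True
    then have "P 0 = 0" unfolding P_def init_w by simp
    then obtain K where "P T \<le> 0" using gron[OF T0] by auto
    then have "w T j = 0" unfolding P_def by (simp add: mult_le_0_iff) (metis mult_eq_0_iff not_square_less_zero order_antisym_conv)
    then show ?thesis by simp
  next
    case False
    have sm: "sqrt (real m) > 0" using jm by simp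
    have pos0: "s * w 0 j > 0"
      unfolding init_w using False sj sm by (auto intro: divide_pos_pos)
    have nz: "w t j \<noteq> 0" if t0: "t \<ge> 0" for t
    proof
      assume "w t j = 0"
      then have "P t = 0" unfolding P_def by simp
      moreover have "P 0 > 0" using pos0 unfolding P_def by (metis mult_eq_0_iff not_real_square_gt_zero)
      moreover obtain K where "P 0 \<le> P t * exp (K * t)" using gron[OF t0] by auto
      ultimately show False by simp
    qed
    show ?thesis
    proof (rule ccontr)
      assume "\<not> s * w T j \<ge> 0"
      then have neg: "s * w T j \<le> 0" by simp
      have "continuous_on {0..T} (\<lambda>t. s * w t j)"
        by (intro continuous_intros continuous_on_subset[OF cw[OF jm]]) auto
      then obtain t where t: "0 \<le> t" "t \<le> T" "s * w t j = 0"
        using IVT2'[of "\<lambda>t. s * w t j" T 0 0] neg pos0 T0 by auto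
      then have "w t j = 0" using sj by auto
      then show False using nz t by simp
    qed
  qed
  have "s * wi \<ge> 0"
  proof (rule tendsto_lowerbound)
    show "((\<lambda>t. s * w t j) \<longlongrightarrow> s * wi) at_top" by (intro tendsto_intros lim_w)
    show "\<forall>\<^sub>F t in at_top. 0 \<le> s * w t j"
      using eventually_ge_at_top[of "0::real"] by eventually_elim (rule sgn_nonneg)
  qed simp
  moreover have "wi * wi = ui \<bullet> ui"
  proof -
    have "((\<lambda>t. w t j * w t j - u t j \<bullet> u t j) \<longlongrightarrow> wi * wi - ui \<bullet> ui) at_top"
      by (intro tendsto_intros lim_w lim_u)
    moreover have "\<forall>\<^sub>F t in at_top. w t j * w t j - u t j \<bullet> u t j = 0"
      using eventually_ge_at_top[of "0::real"] by eventually_elim (simp add: wsq)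
    then have "((\<lambda>t. w t j * w t j - u t j \<bullet> u t j) \<longlongrightarrow> 0) at_top"
      by (rule tendsto_eventually)
    ultimately have "wi * wi - ui \<bullet> ui = 0"
      by (rule tendsto_unique[rotated]) simp
    then show ?thesis by simp
  qed
  then have "norm ui = \<bar>wi\<bar>" by (metis norm_eq_sqrt_inner real_sqrt_abs2)
  ultimately show ?thesis using sj by auto
qed



lemma sum_mid: "(a::real) * (\<Sum>q\<in>A. f q) * b = (\<Sum>q\<in>A. a * f q * b)"
  by (simp add: sum_distrib_left sum_distrib_right)

lemma quad_kernel:
  fixes A :: "'b set" and e :: "nat \<Rightarrow> real" and c :: "'b \<Rightarrow> real"
  shows "(\<Sum>i<n. \<Sum>k<n. e i * (\<Sum>q\<in>A. c q * p q i * p q k) * e k)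
       = (\<Sum>q\<in>A. c q * (\<Sum>i<n. e i * p q i)^2)"
proof -
  have "(\<Sum>i<n. \<Sum>k<n. e i * (\<Sum>q\<in>A. c q * p q i * p q k) * e k)
      = (\<Sum>i<n. \<Sum>k<n. \<Sum>q\<in>A. c q * (e i * p q i) * (e k * p q k))"
    unfolding sum_mid by (intro sum.cong refl) (simp add: algebra_simps)
  also have "\<dots> = (\<Sum>i<n. \<Sum>q\<in>A. \<Sum>k<n. c q * (e i * p q i) * (e k * p q k))"
    by (intro sum.cong refl) (rule sum.swap)
  also have "\<dots> = (\<Sum>q\<in>A. \<Sum>i<n. \<Sum>k<n. c q * (e i * p q i) * (e k * p q k))"
    by (rule sum.swap)
  also have "\<dots> = (\<Sum>q\<in>A. c q * (\<Sum>i<n. e i * p q i)^2)"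
    by (intro sum.cong refl)
       (simp add: power2_eq_square sum_product sum_distrib_left algebra_simps)
  finally show ?thesis .
qed

lemma risk_min:
  fixes f g :: "'a \<Rightarrow> real"
  assumes "n \<ge> 1" and orth: "(\<Sum>i<n. (y i - f (x i)) * (f (x i) - g (x i))) = 0"
  shows "emp_risk n x y f \<le> emp_risk n x y g"
proof -
  have "(\<Sum>i<n. (y i - g (x i))\<^sup>2) = (\<Sum>i<n. (y i - f (x i))\<^sup>2 + 2 * ((y i - f (x i)) * (f (x i) - g (x i))) + (f (x i) - g (x i))\<^sup>2)"
    by (intro sum.cong refl) (simp add: power2_eq_square algebra_simps)
  also have "\<dots> = (\<Sum>i<n. (y i - f (x i))\<^sup>2) + 2 * (\<Sum>i<n. (y i - f (x i)) * (f (x i) - g (x i))) + (\<Sum>i<n. (f (x i) - g (x i))\<^sup>2)"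
    by (simp add: sum.distrib sum_distrib_left)
  finally have "(\<Sum>i<n. (y i - g (x i))\<^sup>2) \<ge> (\<Sum>i<n. (y i - f (x i))\<^sup>2)"
    using orth by (simp add: sum_nonneg)
  then show ?thesis unfolding emp_risk_def using assms(1)
    by (intro mult_left_mono) auto
qed


lemma sum_group:
  fixes h :: "'b \<Rightarrow> real" and a :: "nat \<Rightarrow> real"
  assumes "finite S"
  shows "(\<Sum>j\<in>S. h (t j) * a j) = (\<Sum>q\<in>t ` S. h q * (\<Sum>j\<in>{j\<in>S. t j = q}. a j))"
proof -
  have "(\<Sum>j\<in>S. h (t j) * a j) = (\<Sum>q\<in>t ` S. \<Sum>j\<in>{j\<in>S. t j = q}. h (t j) * a j)"
    by (rule sum.image_gen[OF assms])
  also have "\<dots> = (\<Sum>q\<in>t ` S. h q * (\<Sum>j\<in>{j\<in>S. t j = q}. a j))"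
    by (intro sum.cong refl) (simp add: sum_distrib_left)
  finally show ?thesis .
qed

theorem corollary1:
  fixes x :: "nat \<Rightarrow> real ^ 'd" and y :: "nat \<Rightarrow> real" and n m :: nat
    and \<Theta> :: "nat \<Rightarrow> real ^ 'd" and s :: "nat \<Rightarrow> real"
    and w :: "real \<Rightarrow> nat \<Rightarrow> real" and u :: "real \<Rightarrow> nat \<Rightarrow> real ^ 'd"
    and w_inf :: "nat \<Rightarrow> real" and u_inf :: "nat \<Rightarrow> real ^ 'd"
  assumes "n \<ge> 1" and "m \<ge> 1"
    and sgn: "\<forall>j<m. s j = 1 \<or> s j = -1"
    and init_u: "\<forall>j<m. u 0 j = (1 / sqrt (real m)) *\<^sub>R \<Theta> j"
    and init_w: "\<forall>j<m. w 0 j = s j * norm (\<Theta> j) / sqrt (real m)"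
    and flow_w: "\<forall>j<m. \<forall>t\<ge>0. ((\<lambda>t. w t j) has_real_derivative
                   flow_w n x y m (w t) (u t) j) (at t within {0..})"
    and flow_u: "\<forall>j<m. \<forall>t\<ge>0. ((\<lambda>t. u t j) has_vector_derivative
                   flow_u n x y m (w t) (u t) j) (at t within {0..})"
    and lim_w: "\<forall>j<m. ((\<lambda>t. w t j) \<longlongrightarrow> w_inf j) at_top"
    and lim_u: "\<forall>j<m. ((\<lambda>t. u t j) \<longlongrightarrow> u_inf j) at_top"
    and stat_w: "\<forall>j<m. flow_w n x y m w_inf u_inf j = 0"
    and stat_u: "\<forall>j<m. flow_u n x y m w_inf u_inf j = 0"
  shows "net m w_inf u_inf \<in> rkhs n x (TstarT n x m s (\<lambda>j. sqrt (real m) *\<^sub>R u_inf j))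
       \<and> (\<forall>g \<in> rkhs n x (TstarT n x m s (\<lambda>j. sqrt (real m) *\<^sub>R u_inf j)).
            emp_risk n x y (net m w_inf u_inf) \<le> emp_risk n x y g)"
proof -
  define th where "th = (\<lambda>j. sqrt (real m) *\<^sub>R u_inf j)"
  define f where "f = net m w_inf u_inf"
  define r where "r i = y i - f (x i)" for i
  define Im where "Im = th ` {..<m}"
  define am where "am = atom_mass m s th"
  define cc where "cc q = \<bar>am q\<bar> * (norm q)\<^sup>2" for q :: "real ^ 'd"
  have n0: "real n > 0" using assms(1) by simp
  have m0: "sqrt (real m) > 0" using assms(2) by simp
  have finIm: "finite Im" unfolding Im_def by simp
  have kH: "kernelH m s th z z' = (\<Sum>q\<in>Im. cc q * relu (z \<bullet> q) * relu (z' \<bullet> q))" for z z'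
    unfolding kernelH_def Im_def cc_def am_def by (simp add: mult.assoc)
  have st1: "(\<Sum>i<n. r i * relu (x i \<bullet> u_inf j)) = 0" if "j < m" for j
    using stat_w that n0 unfolding flow_w_def r_def f_def by auto
  have st2: "(\<Sum>i<n. r i * relu (x i \<bullet> q)) = 0" if qI: "q \<in> Im" for q
  proof -
    obtain j where j: "j < m" "q = th j" using qI unfolding Im_def by auto
    have "relu (x i \<bullet> q) = sqrt (real m) * relu (x i \<bullet> u_inf j)" for i
      unfolding j th_def using m0 by (simp add: relu_scale)
    then have "(\<Sum>i<n. r i * relu (x i \<bullet> q)) = sqrt (real m) * (\<Sum>i<n. r i * relu (x i \<bullet> u_inf j))"
      by (simp add: sum_distrib_left algebra_simps)
    then show ?thesis using st1[OF j(1)] by simp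
  qed
  have st3: "(\<Sum>k<n. r k * kernelH m s th (x k) z) = 0" for z
  proof -
    have "(\<Sum>k<n. r k * kernelH m s th (x k) z)
        = (\<Sum>k<n. \<Sum>q\<in>Im. cc q * relu (z \<bullet> q) * (r k * relu (x k \<bullet> q)))"
      unfolding kH by (intro sum.cong refl) (simp add: sum_distrib_left algebra_simps)
    also have "\<dots> = (\<Sum>q\<in>Im. \<Sum>k<n. cc q * relu (z \<bullet> q) * (r k * relu (x k \<bullet> q)))"
      by (rule sum.swap)
    also have "\<dots> = (\<Sum>q\<in>Im. cc q * relu (z \<bullet> q) * (\<Sum>k<n. r k * relu (x k \<bullet> q)))"
      by (simp add: sum_distrib_left)
    also have "\<dots> = 0" using st2 by simp
    finally show ?thesis .
  qed
  have ksym: "kernelH m s th z z' = kernelH m s th z' z" for z z'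
    unfolding kH by (intro sum.cong refl) (simp add: algebra_simps)
  have orth_eig: "(\<Sum>k<n. r k * e (x k)) = 0"
    if ef: "is_eigenfun n x (TstarT n x m s th) e l" and l0: "l > 0" for e l
  proof -
    have ek: "e (x k) = (1 / (l * real n)) * (\<Sum>i<n. kernelH m s th (x k) (x i) * e (x i))"
      if "k < n" for k
    proof -
      have "TstarT n x m s th e (x k) = l * e (x k)" using ef that unfolding is_eigenfun_def by blast
      then show ?thesis using l0 n0 unfolding TstarT_def by (simp add: field_simps)
    qed
    have "(\<Sum>k<n. r k * e (x k))
        = (\<Sum>k<n. r k * ((1 / (l * real n)) * (\<Sum>i<n. kernelH m s th (x k) (x i) * e (x i))))"
      by (rule sum.cong[OF refl]) (metis ek lessThan_iff)
    also have "\<dots> = (1 / (l * real n)) * (\<Sum>k<n. \<Sum>i<n. e (x i) * (r k * kernelH m s th (x k) (x i)))"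
      unfolding sum_distrib_left by (intro sum.cong refl) (simp only: mult_ac)
    also have "(\<Sum>k<n. \<Sum>i<n. e (x i) * (r k * kernelH m s th (x k) (x i)))
        = (\<Sum>i<n. \<Sum>k<n. e (x i) * (r k * kernelH m s th (x k) (x i)))"
      by (rule sum.swap)
    also have "\<dots> = (\<Sum>i<n. e (x i) * (\<Sum>k<n. r k * kernelH m s th (x k) (x i)))"
      by (simp add: sum_distrib_left)
    also have "\<dots> = 0" using st3 by simp
    finally show ?thesis by simp
  qed
  have orth_g: "(\<Sum>k<n. r k * g (x k)) = 0" if "g \<in> rkhs n x (TstarT n x m s th)" for g
  proof -
    have "\<exists>F c. finite F \<and> F \<subseteq> {e. \<exists>lam>0. is_eigenfun n x (TstarT n x m s th) e lam}
       \<and> (\<forall>i<n. g (x i) = (\<Sum>e\<in>F. c e * e (x i)))"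
      using that unfolding rkhs_def by (rule CollectD)
    then obtain F c where Fall: "finite F \<and> F \<subseteq> {e. \<exists>lam>0. is_eigenfun n x (TstarT n x m s th) e lam}
       \<and> (\<forall>i<n. g (x i) = (\<Sum>e\<in>F. c e * e (x i)))" by (elim exE)
    have F1: "finite F" using Fall by (rule conjunct1)
    have F2: "F \<subseteq> {e. \<exists>lam>0. is_eigenfun n x (TstarT n x m s th) e lam}"
      using Fall by (metis (no_types, lifting))
    have gF: "\<forall>i<n. g (x i) = (\<Sum>e\<in>F. c e * e (x i))"
      using Fall by (rule conjunct2[THEN conjunct2])
    have "(\<Sum>k<n. r k * g (x k)) = (\<Sum>k<n. \<Sum>e\<in>F. c e * (r k * e (x k)))"
      using gF by (intro sum.cong refl) (simp add: sum_distrib_left algebra_simps)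
    also have "\<dots> = (\<Sum>e\<in>F. c e * (\<Sum>k<n. r k * e (x k)))"
      by (subst sum.swap) (simp add: sum_distrib_left)
    also have "\<dots> = 0"
    proof (intro sum.neutral ballI)
      fix e assume "e \<in> F"
      then obtain l where "l > 0" "is_eigenfun n x (TstarT n x m s th) e l" using F2 by blast
      then show "c e * (\<Sum>k<n. r k * e (x k)) = 0" using orth_eig by simp
    qed
    finally show ?thesis .
  qed
  have orth_f: "(\<Sum>k<n. r k * f (x k)) = 0"
  proof -
    have "(\<Sum>k<n. r k * f (x k)) = (\<Sum>k<n. \<Sum>j<m. w_inf j * (r k * relu (x k \<bullet> u_inf j)))"
      unfolding f_def net_def by (intro sum.cong refl) (simp add: sum_distrib_left algebra_simps)
    also have "\<dots> = (\<Sum>j<m. w_inf j * (\<Sum>k<n. r k * relu (x k \<bullet> u_inf j)))"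
      by (subst sum.swap) (simp add: sum_distrib_left)
    also have "\<dots> = 0" using st1 by simp
    finally show ?thesis .
  qed
  have part2: "\<forall>g\<in>rkhs n x (TstarT n x m s th). emp_risk n x y f \<le> emp_risk n x y g"
  proof
    fix g assume g: "g \<in> rkhs n x (TstarT n x m s th)"
    show "emp_risk n x y f \<le> emp_risk n x y g"
    proof (rule risk_min[OF assms(1)])
      have "(\<Sum>i<n. (y i - f (x i)) * (f (x i) - g (x i)))
          = (\<Sum>k<n. r k * f (x k)) - (\<Sum>k<n. r k * g (x k))"
        unfolding r_def by (simp add: sum_subtractf right_diff_distrib)
      then show "(\<Sum>i<n. (y i - f (x i)) * (f (x i) - g (x i))) = 0"
        using orth_f orth_g[OF g] by simp
    qed
  qed
  have part1: "f \<in> rkhs n x (TstarT n x m s th)"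
  proof -
    have wsign: "w_inf j = s j * norm (u_inf j)" if jm: "j < m" for j
    proof -
      have sj: "s j = 1 \<or> s j = -1" using sgn jm by blast
      have iu: "u 0 j = (1 / sqrt (real m)) *\<^sub>R \<Theta> j" using init_u jm by blast
      have iw: "w 0 j = s j * norm (\<Theta> j) / sqrt (real m)" using init_w jm by blast
      have lw: "((\<lambda>t. w t j) \<longlongrightarrow> w_inf j) at_top" using lim_w jm by blast
      have lu: "((\<lambda>t. u t j) \<longlongrightarrow> u_inf j) at_top" using lim_u jm by blast
      show ?thesis by (rule neuron_sign[OF assms(1) jm sj iu iw flow_w flow_u lw lu])
    qed
    have uth: "u_inf j = (1 / sqrt (real m)) *\<^sub>R th j" for j
      unfolding th_def using m0 by simp
    have fx: "f z = (\<Sum>q\<in>Im. norm q * relu (z \<bullet> q) * am q)" for z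
    proof -
      have "f z = (\<Sum>j<m. (norm (th j) * relu (z \<bullet> th j)) * (s j / real m))"
        unfolding f_def net_def
      proof (intro sum.cong refl)
        fix j assume "j \<in> {..<m}"
        then have a: "w_inf j = s j * norm (u_inf j)" using wsign by simp
        have b: "norm (u_inf j) = norm (th j) / sqrt (real m)" unfolding uth using m0 by simp
        have c: "relu (z \<bullet> u_inf j) = relu (z \<bullet> th j) / sqrt (real m)"
          unfolding uth using m0 by (simp add: relu_scale divide_inverse mult.commute)
        have "w_inf j * relu (z \<bullet> u_inf j)
            = (s j * (norm (th j) / sqrt (real m))) * (relu (z \<bullet> th j) / sqrt (real m))"
          by (simp only: a b c)
        also have "\<dots> = s j * norm (th j) * relu (z \<bullet> th j) / (sqrt (real m) * sqrt (real m))"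
          by simp
        also have "sqrt (real m) * sqrt (real m) = real m" by simp
        finally show "w_inf j * relu (z \<bullet> u_inf j) = norm (th j) * relu (z \<bullet> th j) * (s j / real m)"
          by simp
      qed
      also have "\<dots> = (\<Sum>q\<in>Im. norm q * relu (z \<bullet> q) * (\<Sum>j\<in>{j\<in>{..<m}. th j = q}. s j / real m))"
        unfolding Im_def by (rule sum_group) simp
      also have "\<dots> = (\<Sum>q\<in>Im. norm q * relu (z \<bullet> q) * am q)"
      proof (intro sum.cong refl)
        fix q
        have "{j\<in>{..<m}. th j = q} = {j. j < m \<and> th j = q}" by auto
        then show "norm q * relu (z \<bullet> q) * (\<Sum>j\<in>{j\<in>{..<m}. th j = q}. s j / real m) = norm q * relu (z \<bullet> q) * am q"
          unfolding am_def atom_mass_def by (simp add: sum_divide_distrib[symmetric])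
      qed
      finally show ?thesis .
    qed
    define G where "G i k = (1 / real n) * kernelH m s th (x i) (x k)" for i k
    have symG: "symm n G" unfolding symm_def G_def using ksym by simp
    obtain E where finE: "finite E"
      and eigE: "\<forall>e\<in>E. suppn n e \<and> e \<noteq> (\<lambda>_. 0) \<and> (\<exists>l. mvn n G e = (\<lambda>i. l * e i))"
      and decE: "\<forall>v. suppn n v \<longrightarrow> (\<forall>k. v k = (\<Sum>e\<in>E. ipn n v e / ipn n e e * e k))"
      using spectral[OF symG] by blast
    define fv where "fv k = (if k < n then f (x k) else 0)" for k
    have sfv: "suppn n fv" unfolding suppn_def fv_def by simp
    define Pq where "Pq e q = (\<Sum>i<n. e i * relu (x i \<bullet> q))" for e q
    have bfE: "bf n G e e = (1 / real n) * (\<Sum>q\<in>Im. cc q * (Pq e q)^2)" for e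
    proof -
      have "bf n G e e = (1 / real n) * (\<Sum>i<n. \<Sum>k<n. e i * (\<Sum>q\<in>Im. cc q * relu (x i \<bullet> q) * relu (x k \<bullet> q)) * e k)"
        unfolding bf_def G_def kH by (simp add: sum_distrib_left mult_ac)
      also have "\<dots> = (1 / real n) * (\<Sum>q\<in>Im. cc q * (Pq e q)^2)"
        unfolding Pq_def by (subst quad_kernel) simp
      finally show ?thesis .
    qed
    have ipfv: "ipn n fv e = (\<Sum>q\<in>Im. norm q * am q * Pq e q)" for e
    proof -
      have "ipn n fv e = (\<Sum>k<n. \<Sum>q\<in>Im. norm q * am q * (e k * relu (x k \<bullet> q)))"
        unfolding ipn_def fv_def fx by (intro sum.cong refl) (simp add: sum_distrib_right, simp add: mult_ac)
      also have "\<dots> = (\<Sum>q\<in>Im. norm q * am q * Pq e q)"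
        unfolding Pq_def by (subst sum.swap) (simp add: sum_distrib_left)
      finally show ?thesis .
    qed
    have key: "ipn n fv e = 0 \<or> (\<exists>l>0. mvn n G e = (\<lambda>i. l * e i))" if eE: "e \<in> E" for e
    proof -
      obtain l where l: "mvn n G e = (\<lambda>i. l * e i)" using eigE eE by blast
      have pe: "ipn n e e > 0" using eigE eE ipn_pos by blast
      show ?thesis
      proof (cases "l > 0")
        case True then show ?thesis using l by blast
      next
        case False
        have "bf n G e e = l * ipn n e e"
          using ipn_mvn[of n e G e] l by (simp add: ipn_scale2)
        also have "\<dots> \<le> 0" using False pe by (simp add: mult_nonpos_nonneg)
        finally have le: "(1 / real n) * (\<Sum>q\<in>Im. cc q * (Pq e q)^2) \<le> 0" unfolding bfE .
        have nonneg: "\<forall>q\<in>Im. cc q * (Pq e q)^2 \<ge> 0" unfolding cc_def by simp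
        have "(\<Sum>q\<in>Im. cc q * (Pq e q)^2) \<le> 0"
          using le n0 by (simp add: divide_le_0_iff)
        then have "(\<Sum>q\<in>Im. cc q * (Pq e q)^2) = 0"
          using sum_nonneg[of Im "\<lambda>q. cc q * (Pq e q)^2"] nonneg by (meson order_antisym)
        then have z: "\<forall>q\<in>Im. cc q * (Pq e q)^2 = 0"
          using sum_nonneg_eq_0_iff[OF finIm, of "\<lambda>q. cc q * (Pq e q)^2"] nonneg by simp
        have "\<forall>q\<in>Im. norm q * am q * Pq e q = 0"
        proof
          fix q assume "q \<in> Im"
          then have "\<bar>am q\<bar> * (norm q)^2 * (Pq e q)^2 = 0" using z unfolding cc_def by simp
          then have "am q = 0 \<or> norm q = 0 \<or> Pq e q = 0" by simp
          then show "norm q * am q * Pq e q = 0" by (elim disjE) simp_all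
        qed
        then have "ipn n fv e = 0" unfolding ipfv by (intro sum.neutral) (simp only:)
        then show ?thesis by blast
      qed
    qed
    define Ep where "Ep = {e\<in>E. \<exists>l>0. mvn n G e = (\<lambda>i. l * e i)}"
    have finEp: "finite Ep" unfolding Ep_def using finE by simp
    define lam where "lam e = (SOME l. l > 0 \<and> mvn n G e = (\<lambda>i. l * e i))" for e
    have lamE: "lam e > 0 \<and> mvn n G e = (\<lambda>i. lam e * e i)" if "e \<in> Ep" for e
    proof -
      have "\<exists>l. l > 0 \<and> mvn n G e = (\<lambda>i. l * e i)" using that unfolding Ep_def by blast
      then show ?thesis unfolding lam_def by (rule someI_ex)
    qed
    define hat where "hat e = (\<lambda>z. (1 / (lam e * real n)) * (\<Sum>i<n. kernelH m s th z (x i) * e i))" for e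
    have mvk: "mvn n G e k = (1 / real n) * (\<Sum>i<n. kernelH m s th (x k) (x i) * e i)" if "k < n" for e k
      unfolding mvn_def G_def using that by (simp add: sum_distrib_left mult_ac)
    have hat_at: "hat e (x k) = e k" if eEp: "e \<in> Ep" and k: "k < n" for e k
    proof -
      have "mvn n G e k = lam e * e k" using lamE[OF eEp] by simp
      then have "(1 / real n) * (\<Sum>i<n. kernelH m s th (x k) (x i) * e i) = lam e * e k"
        using mvk[OF k] by simp
      then show ?thesis unfolding hat_def using lamE[OF eEp] n0 by (simp add: field_simps)
    qed
    have suppE: "suppn n e" if "e \<in> Ep" for e using that eigE unfolding Ep_def by blast
    have vec_hat: "(\<lambda>k. if k < n then hat e (x k) else 0) = e" if eEp: "e \<in> Ep" for e
    proof
      fix k show "(if k < n then hat e (x k) else 0) = e k"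
        using hat_at[OF eEp] suppE[OF eEp] unfolding suppn_def by auto
    qed
    have inj: "inj_on hat Ep"
    proof (rule inj_onI)
      fix e1 e2 assume "e1 \<in> Ep" "e2 \<in> Ep" "hat e1 = hat e2"
      then show "e1 = e2" using vec_hat by metis
    qed
    have eigf: "is_eigenfun n x (TstarT n x m s th) (hat e) (lam e)" if eEp: "e \<in> Ep" for e
      unfolding is_eigenfun_def
    proof (intro conjI allI impI)
      have "e \<noteq> (\<lambda>_. 0)" using eEp eigE unfolding Ep_def by blast
      then obtain i where "e i \<noteq> 0" by auto
      moreover have "i < n" using suppE[OF eEp] \<open>e i \<noteq> 0\<close> unfolding suppn_def by (meson not_le)
      ultimately show "\<exists>i<n. hat e (x i) \<noteq> 0" using hat_at[OF eEp] by auto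
    next
      fix k assume k: "k < n"
      have "TstarT n x m s th (hat e) (x k) = (1 / real n) * (\<Sum>i<n. kernelH m s th (x k) (x i) * e i)"
        unfolding TstarT_def using hat_at[OF eEp] by simp
      also have "\<dots> = mvn n G e k" using mvk[OF k] by simp
      also have "\<dots> = lam e * e k" using lamE[OF eEp] by simp
      finally show "TstarT n x m s th (hat e) (x k) = lam e * hat e (x k)" using hat_at[OF eEp k] by simp
    qed
    define cf where "cf h = ipn n fv (\<lambda>k. if k < n then h (x k) else 0)
        / ipn n (\<lambda>k. if k < n then h (x k) else 0) (\<lambda>k. if k < n then h (x k) else 0)" for h
    have cf_hat: "cf (hat e) = ipn n fv e / ipn n e e" if "e \<in> Ep" for e
      unfolding cf_def vec_hat[OF that] ..
    have repr: "f (x k) = (\<Sum>h\<in>hat ` Ep. cf h * h (x k))" if k: "k < n" for k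
    proof -
      have "f (x k) = fv k" unfolding fv_def using k by simp
      also have "\<dots> = (\<Sum>e\<in>E. ipn n fv e / ipn n e e * e k)" using decE sfv by blast
      also have "\<dots> = (\<Sum>e\<in>Ep. ipn n fv e / ipn n e e * e k)"
      proof (rule sum.mono_neutral_right[OF finE])
        show "Ep \<subseteq> E" unfolding Ep_def by auto
        show "\<forall>e\<in>E - Ep. ipn n fv e / ipn n e e * e k = 0"
          using key unfolding Ep_def by auto
      qed
      also have "\<dots> = (\<Sum>e\<in>Ep. cf (hat e) * hat e (x k))"
        using cf_hat hat_at k by (intro sum.cong refl) simp
      also have "\<dots> = (\<Sum>h\<in>hat ` Ep. cf h * h (x k))"
        by (rule sum.reindex[OF inj, symmetric, unfolded comp_def])
      finally show ?thesis .
    qed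
    have "hat ` Ep \<subseteq> {e. \<exists>lam>0. is_eigenfun n x (TstarT n x m s th) e lam}"
      using eigf lamE by blast
    then show ?thesis unfolding rkhs_def using finEp repr by blast
  qed
  show ?thesis using part1 part2 unfolding f_def th_def by blast
qed

end
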